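(* Let $G$ be a graph and let $K$ be a clique of $G$ that is a block of $G$ and contains exactly one cut-vertex $c$ of $G$. Let $G_K$ be the graph obtained from $G$ by deleting all vertices of $K$ other than $c$. Then $p(G)=p(G_K)$.
   Context: All graphs are finite and simple. For an acyclic digraph $D$, the phylogeny graph $P(D)$ is the graph on $V(D)$ in which distinct vertices $u,v$ are adjacent if and only if $(u,v)\in A(D)$, or $(v,u)\in A(D)$, or there is a vertex $w$ with $(u,w),(v,w)\in A(D)$. A phylogeny digraph for a graph $G$ is an acyclic digraph $D$ such that $G$ is an induced subgraph of $P(D)$ and $D$ has no arc from a vertex of $V(D)\setminus V(G)$ to a vertex of $V(G)$. The phylogeny number $p(G)$ is the minimum of $|V(D)\setminus V(G)|$ over all phylogeny digraphs $D$ for $G$. *)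

theory Defs
  imports Main
begin

definition graph :: "'a set \<Rightarrow> ('a \<times> 'a) set \<Rightarrow> bool" where
  "graph V E \<longleftrightarrow> finite V \<and> E \<subseteq> V \<times> V \<and> sym E \<and> irrefl E"

definition induced_edges :: "('a \<times> 'a) set \<Rightarrow> 'a set \<Rightarrow> ('a \<times> 'a) set" where
  "induced_edges E S = E \<inter> (S \<times> S)"

definition reach :: "'a set \<Rightarrow> ('a \<times> 'a) set \<Rightarrow> ('a \<times> 'a) set" where
  "reach V E = ((E \<inter> (V \<times> V))\<^sup>*) \<inter> (V \<times> V)"

definition num_components :: "'a set \<Rightarrow> ('a \<times> 'a) set \<Rightarrow> nat" where
  "num_components V E = card (V // reach V E)"

definition connected_graph :: "'a set \<Rightarrow> ('a \<times> 'a) set \<Rightarrow> bool" where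
  "connected_graph V E \<longleftrightarrow> V \<noteq> {} \<and> (\<forall>u\<in>V. \<forall>v\<in>V. (u, v) \<in> reach V E)"

definition cut_vertex :: "'a set \<Rightarrow> ('a \<times> 'a) set \<Rightarrow> 'a \<Rightarrow> bool" where
  "cut_vertex V E v \<longleftrightarrow> v \<in> V \<and>
     num_components (V - {v}) (induced_edges E (V - {v})) > num_components V E"

definition clique :: "'a set \<Rightarrow> ('a \<times> 'a) set \<Rightarrow> 'a set \<Rightarrow> bool" where
  "clique V E K \<longleftrightarrow> K \<subseteq> V \<and> (\<forall>u\<in>K. \<forall>v\<in>K. u \<noteq> v \<longrightarrow> (u, v) \<in> E)"

definition nonsep :: "'a set \<Rightarrow> ('a \<times> 'a) set \<Rightarrow> 'a set \<Rightarrow> bool" where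
  "nonsep V E B \<longleftrightarrow> B \<subseteq> V \<and> connected_graph B (induced_edges E B) \<and>
     (\<forall>v\<in>B. \<not> cut_vertex B (induced_edges E B) v)"

text \<open>A block: a maximal connected subgraph without a cut-vertex
  (maximal subgraphs with this property are induced, so we work with vertex sets).\<close>
definition is_block :: "'a set \<Rightarrow> ('a \<times> 'a) set \<Rightarrow> 'a set \<Rightarrow> bool" where
  "is_block V E B \<longleftrightarrow> nonsep V E B \<and> (\<forall>B'. B \<subset> B' \<and> B' \<subseteq> V \<longrightarrow> \<not> nonsep V E B')"

definition phylo_edges :: "('b \<times> 'b) set \<Rightarrow> ('b \<times> 'b) set" where
  "phylo_edges A = {(u, v). u \<noteq> v \<and> ((u, v) \<in> A \<or> (v, u) \<in> A \<or> (\<exists>w. (u, w) \<in> A \<and> (v, w) \<in> A))}"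

text \<open>A phylogeny digraph D = (W, A) for G = (V, E).  The vertices of D are of type
  'a + nat: the vertex x of G is Inl x, and the additional vertices are of the form Inr n.\<close>
definition phylogeny_digraph ::
  "'a set \<Rightarrow> ('a \<times> 'a) set \<Rightarrow> ('a + nat) set \<Rightarrow> (('a + nat) \<times> ('a + nat)) set \<Rightarrow> bool" where
  "phylogeny_digraph V E W A \<longleftrightarrow>
     finite W \<and> A \<subseteq> W \<times> W \<and> acyclic A \<and>
     Inl ` V \<subseteq> W \<and> W \<subseteq> Inl ` V \<union> range Inr \<and>
     (\<forall>u\<in>V. \<forall>v\<in>V. (u, v) \<in> E \<longleftrightarrow> (Inl u, Inl v) \<in> phylo_edges A) \<and>
     (\<forall>x\<in>W - Inl ` V. \<forall>y\<in>Inl ` V. (x, y) \<notin> A)"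

definition phylogeny_number :: "'a set \<Rightarrow> ('a \<times> 'a) set \<Rightarrow> nat" where
  "phylogeny_number V E =
     (LEAST k. \<exists>W A. phylogeny_digraph V E W A \<and> card (W - Inl ` V) = k)"

end

theory Submission
  imports Defs "HOL-Library.Transitive_Closure_Table"
begin


lemma reach_induced: "reach S (induced_edges F S) = (F \<inter> S \<times> S)\<^sup>* \<inter> S \<times> S"
  unfolding reach_def induced_edges_def by (simp add: Int_assoc)

lemma induced_induced: "T \<subseteq> S \<Longrightarrow> induced_edges (induced_edges F S) T = induced_edges F T"
  unfolding induced_edges_def by blast

lemma equiv_reach: assumes "sym F" shows "equiv S (reach S F)"
proof (rule equivI)
  show "reach S F \<subseteq> S \<times> S" unfolding reach_def by blast
  show "refl_on S (reach S F)" unfolding reach_def refl_on_def by blast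
  have "sym (F \<inter> S \<times> S)" using assms unfolding sym_def by blast
  hence s: "sym ((F \<inter> S \<times> S)\<^sup>*)" by (rule sym_rtrancl)
  show "sym (reach S F)" unfolding reach_def using s unfolding sym_def by blast
  show "trans (reach S F)" unfolding reach_def
  proof (rule transI)
    fix x y z assume a: "(x, y) \<in> (F \<inter> S \<times> S)\<^sup>* \<inter> S \<times> S" "(y, z) \<in> (F \<inter> S \<times> S)\<^sup>* \<inter> S \<times> S"
    hence "(x, z) \<in> (F \<inter> S \<times> S)\<^sup>*" using rtrancl_trans[of x y "F \<inter> S \<times> S" z] by blast
    thus "(x, z) \<in> (F \<inter> S \<times> S)\<^sup>* \<inter> S \<times> S" using a by blast
  qed
qed

lemma ncomp_le1:
  assumes "finite S" "sym F" "\<forall>x\<in>S. \<forall>y\<in>S. (x, y) \<in> reach S F"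
  shows "num_components S F \<le> 1"
proof -
  have "S // reach S F \<subseteq> {S}"
  proof
    fix X assume "X \<in> S // reach S F"
    then obtain x where x: "x \<in> S" "X = reach S F `` {x}" unfolding quotient_def by blast
    have "reach S F `` {x} = S" using x assms(3) unfolding reach_def by blast
    thus "X \<in> {S}" using x by simp
  qed
  hence "card (S // reach S F) \<le> card {S}" by (intro card_mono) auto
  thus ?thesis unfolding num_components_def by simp
qed

lemma ncomp_eq1:
  assumes "finite S" "sym F" "S \<noteq> {}" "\<forall>x\<in>S. \<forall>y\<in>S. (x, y) \<in> reach S F"
  shows "num_components S F = 1"
proof -
  obtain x where x: "x \<in> S" using assms(3) by blast
  have "S // reach S F = {S}"
  proof
    show "S // reach S F \<subseteq> {S}"
    proof
      fix X assume "X \<in> S // reach S F"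
      then obtain x where x: "x \<in> S" "X = reach S F `` {x}" unfolding quotient_def by blast
      have "reach S F `` {x} = S" using x assms(4) unfolding reach_def by blast
      thus "X \<in> {S}" using x by simp
    qed
    have "reach S F `` {x} = S" using x assms(4) unfolding reach_def by blast
    thus "{S} \<subseteq> S // reach S F" using x unfolding quotient_def by blast
  qed
  thus ?thesis unfolding num_components_def by simp
qed

lemma conn_hub:
  assumes "sym F" "h \<in> T" "\<forall>p\<in>T. (p, h) \<in> (F \<inter> T \<times> T)\<^sup>*"
  shows "\<forall>p\<in>T. \<forall>q\<in>T. (p, q) \<in> reach T (induced_edges F T)"
proof (intro ballI)
  fix p q assume pq: "p \<in> T" "q \<in> T"
  have "sym (F \<inter> T \<times> T)" using assms(1) unfolding sym_def by blast
  hence s: "sym ((F \<inter> T \<times> T)\<^sup>*)" by (rule sym_rtrancl)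
  have "(h, q) \<in> (F \<inter> T \<times> T)\<^sup>*" using s assms(3) pq unfolding sym_def by blast
  hence "(p, q) \<in> (F \<inter> T \<times> T)\<^sup>*" using assms(3) pq by (meson rtrancl_trans)
  thus "(p, q) \<in> reach T (induced_edges F T)" using pq by (simp add: reach_induced)
qed

lemma path_reach:
  assumes "rtrancl_path (\<lambda>a b. (a, b) \<in> F) x xs z" "set (x # xs) \<subseteq> T" "p \<in> set (x # xs)"
  shows "(p, z) \<in> (F \<inter> T \<times> T)\<^sup>* \<and> (x, p) \<in> (F \<inter> T \<times> T)\<^sup>*"
  using assms
proof (induction arbitrary: p rule: rtrancl_path.induct)
  case (base x)
  then show ?case by simp
next
  case (step x y ys z)
  have xy: "(x, y) \<in> F \<inter> T \<times> T" using step by auto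
  show ?case
  proof (cases "p = x")
    case True
    have "(y, z) \<in> (F \<inter> T \<times> T)\<^sup>*" using step by auto
    then show ?thesis using True xy by (meson converse_rtrancl_into_rtrancl rtrancl.rtrancl_refl)
  next
    case False
    hence "p \<in> set (y # ys)" using step by auto
    then have "(p, z) \<in> (F \<inter> T \<times> T)\<^sup>* \<and> (y, p) \<in> (F \<inter> T \<times> T)\<^sup>*" using step by auto
    then show ?thesis using xy by (meson converse_rtrancl_into_rtrancl)
  qed
qed

lemma rt_start: "(a, b) \<in> (F \<inter> T \<times> T)\<^sup>* \<Longrightarrow> a \<notin> T \<Longrightarrow> b = a"
  by (induct rule: converse_rtrancl_induct) auto

lemma rt_end: "(a, b) \<in> (F \<inter> T \<times> T)\<^sup>* \<Longrightarrow> b \<notin> T \<Longrightarrow> b = a"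
  by (induct rule: rtrancl_induct) auto

lemma path_split:
  assumes "rtrancl_path (\<lambda>a b. (a, b) \<in> F) x xs z" "distinct (x # xs)" "v \<in> set (x # xs)"
    "set (x # xs) - {v} \<subseteq> T" "v \<notin> T" "p \<in> set (x # xs)" "p \<noteq> v"
  shows "(x, p) \<in> (F \<inter> T \<times> T)\<^sup>* \<or> (p, z) \<in> (F \<inter> T \<times> T)\<^sup>*"
  using assms
proof (induction arbitrary: p rule: rtrancl_path.induct)
  case (base x)
  then show ?case by simp
next
  case (step x y ys z)
  show ?case
  proof (cases "v = x")
    case True
    hence "set (y # ys) \<subseteq> T" using step by auto
    moreover have "p \<in> set (y # ys)" using step True by auto
    ultimately show ?thesis using path_reach[OF step(2)] by blast
  next
    case False
    hence xT: "x \<in> T" using step by auto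
    show ?thesis
    proof (cases "p = x")
      case True then show ?thesis by simp
    next
      case False
      hence pin: "p \<in> set (y # ys)" using step by auto
      have "(y, p) \<in> (F \<inter> T \<times> T)\<^sup>* \<or> (p, z) \<in> (F \<inter> T \<times> T)\<^sup>*"
        using step \<open>v \<noteq> x\<close> pin by (intro step.IH) auto
      then show ?thesis
      proof
        assume yp: "(y, p) \<in> (F \<inter> T \<times> T)\<^sup>*"
        show ?thesis
        proof (cases "v = y")
          case True
          have "y \<notin> T" using True step(7) by simp
          have "p = y" using rt_start[OF yp \<open>y \<notin> T\<close>] .
          then show ?thesis using True step by simp
        next
          case False
          hence "(x, y) \<in> F \<inter> T \<times> T" using step xT by auto
          then show ?thesis using yp by (meson converse_rtrancl_into_rtrancl)
        qed
      qed simp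
    qed
  qed
qed


lemma sym_induced: "sym F \<Longrightarrow> sym (induced_edges F S)"
  unfolding induced_edges_def sym_def by blast

lemma rt_sym: assumes "sym F" "(a, b) \<in> (F \<inter> T \<times> T)\<^sup>*" shows "(b, a) \<in> (F \<inter> T \<times> T)\<^sup>*"
proof -
  have "sym (F \<inter> T \<times> T)" using assms(1) unfolding sym_def by blast
  hence s: "sym ((F \<inter> T \<times> T)\<^sup>*)" by (rule sym_rtrancl)
  thus ?thesis using assms(2) unfolding sym_def by blast
qed

lemma rt_to_path: "(x, z) \<in> r\<^sup>* \<Longrightarrow> \<exists>xs. rtrancl_path (\<lambda>a b. (a, b) \<in> r) x xs z"
proof (induction rule: converse_rtrancl_induct)
  case base
  then show ?case by (auto intro: rtrancl_path.base)
next
  case (step y z)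
  then show ?case by (auto intro: rtrancl_path.step)
qed

lemma path_set: "rtrancl_path (\<lambda>a b. (a, b) \<in> F \<inter> S \<times> S) x xs z \<Longrightarrow> x \<in> S \<Longrightarrow> set (x # xs) \<subseteq> S"
  by (induction rule: rtrancl_path.induct) auto



lemma key:
  assumes G: "graph V E" and cl: "clique V E K" and bl: "is_block V E K"
    and cK: "c \<in> K" and wK: "w \<in> K" and wc: "w \<noteq> c" and ncut: "\<not> cut_vertex V E w"
    and uV: "u \<in> V" and wu: "(w, u) \<in> E"
  shows "u \<in> K"
proof (rule ccontr)
  assume uK: "u \<notin> K"
  have fin: "finite V" and EV: "E \<subseteq> V \<times> V" and symE: "sym E" and irr: "irrefl E"
    using G unfolding graph_def by auto
  have KV: "K \<subseteq> V" and clq: "\<And>x y. x \<in> K \<Longrightarrow> y \<in> K \<Longrightarrow> x \<noteq> y \<Longrightarrow> (x, y) \<in> E"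
    using cl unfolding clique_def by auto
  have wV: "w \<in> V" using wK KV by auto
  have uw: "u \<noteq> w" using uK wK by auto
  define V1 where "V1 = V - {w}"
  define R where "R = reach V E"
  define R1 where "R1 = reach V1 (induced_edges E V1)"
  have eqR: "equiv V R" unfolding R_def by (rule equiv_reach[OF symE])
  have eqR1: "equiv V1 R1" unfolding R1_def by (rule equiv_reach[OF sym_induced[OF symE]])
  have R1R: "R1 \<subseteq> R"
  proof -
    have "(E \<inter> V1 \<times> V1)\<^sup>* \<subseteq> (E \<inter> V \<times> V)\<^sup>*" by (rule rtrancl_mono) (auto simp: V1_def)
    thus ?thesis unfolding R1_def R_def reach_induced unfolding reach_def V1_def by blast
  qed
  have ERR: "\<And>x y. (x, y) \<in> E \<Longrightarrow> (x, y) \<in> R" unfolding R_def reach_def using EV by blast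
  have u1: "u \<in> V1" and c1: "c \<in> V1" using uV uw cK KV wc unfolding V1_def by auto
  have uc1: "(u, c) \<in> R1"
  proof (rule ccontr)
    assume nuc: "(u, c) \<notin> R1"
    define A where "A = V1 // R1"
    have finA: "finite A" unfolding A_def V1_def using fin eqR1
      by (intro finite_quotient) (auto simp: equiv_def V1_def)
    have cls: "\<And>x. x \<in> V1 \<Longrightarrow> R `` (R1 `` {x}) = R `` {x}"
    proof -
      fix x assume x: "x \<in> V1"
      have "(x, x) \<in> R1" using eqR1 x unfolding equiv_def refl_on_def by blast
      moreover have "trans R" using eqR unfolding equiv_def by blast
      ultimately show "R `` (R1 `` {x}) = R `` {x}" using R1R unfolding trans_def by blast
    qed
    have img: "(\<lambda>X. R `` X) ` A = V // R"
    proof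
      show "(\<lambda>X. R `` X) ` A \<subseteq> V // R"
      proof
        fix Y assume "Y \<in> (\<lambda>X. R `` X) ` A"
        then obtain x where x: "x \<in> V1" "Y = R `` (R1 `` {x})" unfolding A_def quotient_def by blast
        thus "Y \<in> V // R" using cls[OF x(1)] unfolding V1_def quotient_def by blast
      qed
      show "V // R \<subseteq> (\<lambda>X. R `` X) ` A"
      proof
        fix Y assume "Y \<in> V // R"
        then obtain y where y: "y \<in> V" "Y = R `` {y}" unfolding quotient_def by blast
        show "Y \<in> (\<lambda>X. R `` X) ` A"
        proof (cases "y = w")
          case True
          have "R `` {w} = R `` {u}" using eq_equiv_class_iff[OF eqR wV uV] ERR[OF wu] by blast
          hence "Y = R `` (R1 `` {u})" using y True cls[OF u1] by simp
          thus ?thesis using u1 unfolding A_def quotient_def by blast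
        next
          case False
          hence "y \<in> V1" using y unfolding V1_def by auto
          thus ?thesis using y cls unfolding A_def quotient_def by blast
        qed
      qed
    qed
    have ninj: "\<not> inj_on (\<lambda>X. R `` X) A"
    proof
      assume inj: "inj_on (\<lambda>X. R `` X) A"
      have "(u, c) \<in> R"
      proof -
        have "(u, w) \<in> R" using ERR symE wu unfolding sym_def by blast
        moreover have "(w, c) \<in> R" using ERR clq[OF wK cK wc] by blast
        moreover have "trans R" using eqR unfolding equiv_def by blast
        ultimately show ?thesis unfolding trans_def by blast
      qed
      hence "R `` {u} = R `` {c}" using eq_equiv_class_iff[OF eqR uV] cK KV by blast
      hence "R `` (R1 `` {u}) = R `` (R1 `` {c})" using cls u1 c1 by simp
      moreover have "R1 `` {u} \<in> A" "R1 `` {c} \<in> A" using u1 c1 unfolding A_def quotient_def by auto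
      ultimately have "R1 `` {u} = R1 `` {c}" using inj unfolding inj_on_def by blast
      hence "(u, c) \<in> R1" using eq_equiv_class_iff[OF eqR1 u1 c1] by blast
      thus False using nuc by blast
    qed
    have "card ((\<lambda>X. R `` X) ` A) \<noteq> card A" using ninj inj_on_iff_eq_card[OF finA] by blast
    moreover have "card ((\<lambda>X. R `` X) ` A) \<le> card A" using finA by (rule card_image_le)
    ultimately have "card (V // R) < card A" using img by simp
    hence "cut_vertex V E w" unfolding cut_vertex_def num_components_def A_def R_def R1_def V1_def
      using wV by simp
    thus False using ncut by blast
  qed
  define Ro where "Ro = E \<inter> (V - K) \<times> (V - K)"
  have "(u, c) \<in> (E \<inter> V1 \<times> V1)\<^sup>*" using uc1 unfolding R1_def reach_induced by blast
  have ex: "\<And>x y. (x, y) \<in> (E \<inter> V1 \<times> V1)\<^sup>* \<Longrightarrow> y \<in> K \<Longrightarrow> x \<notin> K \<Longrightarrow>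
     \<exists>z b. (x, z) \<in> Ro\<^sup>* \<and> z \<notin> K \<and> b \<in> K \<and> b \<noteq> w \<and> (z, b) \<in> E"
  proof -
    fix x y assume "(x, y) \<in> (E \<inter> V1 \<times> V1)\<^sup>*" "y \<in> K" "x \<notin> K"
    thus "\<exists>z b. (x, z) \<in> Ro\<^sup>* \<and> z \<notin> K \<and> b \<in> K \<and> b \<noteq> w \<and> (z, b) \<in> E"
    proof (induction rule: converse_rtrancl_induct)
      case base
      then show ?case by simp
    next
      case (step x x')
      show ?case
      proof (cases "x' \<in> K")
        case True
        then show ?thesis using step unfolding V1_def by blast
      next
        case False
        then obtain z b where zb: "(x', z) \<in> Ro\<^sup>*" "z \<notin> K" "b \<in> K" "b \<noteq> w" "(z, b) \<in> E"
          using step by blast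
        have "(x, x') \<in> Ro" using step False unfolding Ro_def V1_def by blast
        thus ?thesis using zb by (meson converse_rtrancl_into_rtrancl)
      qed
    qed
  qed
  then obtain z b where zb: "(u, z) \<in> Ro\<^sup>*" "z \<notin> K" "b \<in> K" "b \<noteq> w" "(z, b) \<in> E"
    using \<open>(u, c) \<in> (E \<inter> V1 \<times> V1)\<^sup>*\<close> cK uK by blast
  obtain xs0 where "rtrancl_path (\<lambda>a b. (a, b) \<in> Ro) u xs0 z" using rt_to_path[OF zb(1)] by blast
  then obtain xs where pth0: "rtrancl_path (\<lambda>a b. (a, b) \<in> Ro) u xs z" and dst: "distinct (u # xs)"
    by (rule rtrancl_path_distinct)
  define P where "P = set (u # xs)"
  have PVK: "P \<subseteq> V - K" unfolding P_def using path_set[OF pth0[unfolded Ro_def]] uV uK by blast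
  have pth: "rtrancl_path (\<lambda>a b. (a, b) \<in> E) u xs z"
    using pth0 by (rule rtrancl_path_mono) (auto simp: Ro_def)
  have zP: "z \<in> P"
  proof (cases "xs = []")
    case True
    have "z = u" using pth0 True by (cases rule: rtrancl_path.cases) auto
    thus ?thesis unfolding P_def by simp
  next
    case False
    have "last xs = z" using rtrancl_path_last[OF pth0 False] .
    thus ?thesis using last_in_set[OF False] unfolding P_def by simp
  qed
  define H where "H = K \<union> P"
  have HV: "H \<subseteq> V" unfolding H_def using KV PVK by blast
  have finH: "finite H" using HV fin finite_subset by blast
  have hub: "\<And>T v. H - {v} \<subseteq> T \<Longrightarrow> T \<subseteq> H \<Longrightarrow> \<exists>h\<in>T. \<forall>p\<in>T. (p, h) \<in> (E \<inter> T \<times> T)\<^sup>*"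
  proof -
    fix T v assume T1: "H - {v} \<subseteq> T" and T2: "T \<subseteq> H"
    have Kstep: "\<And>p h. p \<in> K \<Longrightarrow> h \<in> K \<Longrightarrow> p \<in> T \<Longrightarrow> h \<in> T \<Longrightarrow> (p, h) \<in> (E \<inter> T \<times> T)\<^sup>*"
    proof -
      fix p h assume "p \<in> K" "h \<in> K" "p \<in> T" "h \<in> T"
      thus "(p, h) \<in> (E \<inter> T \<times> T)\<^sup>*" using clq by (cases "p = h") auto
    qed
    show "\<exists>h\<in>T. \<forall>p\<in>T. (p, h) \<in> (E \<inter> T \<times> T)\<^sup>*"
    proof (cases "P \<subseteq> T")
      case True
      have PR: "\<And>p. p \<in> P \<Longrightarrow> (p, z) \<in> (E \<inter> T \<times> T)\<^sup>* \<and> (u, p) \<in> (E \<inter> T \<times> T)\<^sup>*"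
        using path_reach[OF pth] True unfolding P_def by blast
      have uT: "u \<in> T" using True unfolding P_def by auto
      have zT: "z \<in> T" using True zP by auto
      show ?thesis
      proof (cases "w \<in> T")
        case wT: True
        have "\<forall>p\<in>T. (p, w) \<in> (E \<inter> T \<times> T)\<^sup>*"
        proof
          fix p assume pT: "p \<in> T"
          show "(p, w) \<in> (E \<inter> T \<times> T)\<^sup>*"
          proof (cases "p \<in> K")
            case True thus ?thesis using Kstep wK pT wT by blast
          next
            case False
            hence "p \<in> P" using pT T2 unfolding H_def by blast
            hence "(p, u) \<in> (E \<inter> T \<times> T)\<^sup>*" using PR rt_sym[OF symE] by blast
            moreover have "(u, w) \<in> E \<inter> T \<times> T" using wu symE uT wT unfolding sym_def by blast
            ultimately show ?thesis by (meson rtrancl_into_rtrancl)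
          qed
        qed
        thus ?thesis using wT by blast
      next
        case wT: False
        have "w \<in> H" unfolding H_def using wK by blast
        hence "v = w" using wT T1 by blast
        hence "b \<in> H - {v}" using zb(3,4) unfolding H_def by blast
        hence bT: "b \<in> T" using T1 by blast
        have "\<forall>p\<in>T. (p, b) \<in> (E \<inter> T \<times> T)\<^sup>*"
        proof
          fix p assume pT: "p \<in> T"
          show "(p, b) \<in> (E \<inter> T \<times> T)\<^sup>*"
          proof (cases "p \<in> K")
            case True thus ?thesis using Kstep zb(3) pT bT by blast
          next
            case False
            hence "p \<in> P" using pT T2 unfolding H_def by blast
            hence "(p, z) \<in> (E \<inter> T \<times> T)\<^sup>*" using PR by blast
            moreover have "(z, b) \<in> E \<inter> T \<times> T" using zb zT bT by blast
            ultimately show ?thesis by (meson rtrancl_into_rtrancl)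
          qed
        qed
        thus ?thesis using bT by blast
      qed
    next
      case False
      then obtain v' where v': "v' \<in> P" "v' \<notin> T" by blast
      hence vv: "v' = v" using T1 unfolding H_def by blast
      have wT: "w \<in> T" and bT: "b \<in> T" using T1 v' vv PVK wK zb(3) unfolding H_def by auto
      have vT: "v \<notin> T" using v' vv by simp
      have "\<forall>p\<in>T. (p, w) \<in> (E \<inter> T \<times> T)\<^sup>*"
      proof
        fix p assume pT: "p \<in> T"
        show "(p, w) \<in> (E \<inter> T \<times> T)\<^sup>*"
        proof (cases "p \<in> K")
          case True thus ?thesis using Kstep wK pT wT by blast
        next
          case False
          hence pP: "p \<in> P" using pT T2 unfolding H_def by blast
          have "p \<noteq> v" using pT vT by blast
          have "(u, p) \<in> (E \<inter> T \<times> T)\<^sup>* \<or> (p, z) \<in> (E \<inter> T \<times> T)\<^sup>*"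
            using path_split[OF pth dst, of v T p] v' vv pP T1 vT \<open>p \<noteq> v\<close>
            unfolding P_def H_def by blast
          thus ?thesis
          proof
            assume up: "(u, p) \<in> (E \<inter> T \<times> T)\<^sup>*"
            have uT: "u \<in> T" using rt_start[OF up] pT by blast
            have "(p, u) \<in> (E \<inter> T \<times> T)\<^sup>*" using rt_sym[OF symE up] .
            moreover have "(u, w) \<in> E \<inter> T \<times> T" using wu symE uT wT unfolding sym_def by blast
            ultimately show ?thesis by (meson rtrancl_into_rtrancl)
          next
            assume pz: "(p, z) \<in> (E \<inter> T \<times> T)\<^sup>*"
            have zT: "z \<in> T" using rt_end[OF pz] pT by blast
            have "(z, b) \<in> E \<inter> T \<times> T" using zb zT bT by blast
            moreover have "(b, w) \<in> E \<inter> T \<times> T" using clq[OF zb(3) wK zb(4)] bT wT by blast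
            ultimately show ?thesis using pz by (meson rtrancl_into_rtrancl)
          qed
        qed
      qed
      thus ?thesis using wT by blast
    qed
  qed
  have symH: "\<And>S. sym (induced_edges E S)" using sym_induced[OF symE] .
  have connH: "\<forall>p\<in>H. \<forall>q\<in>H. (p, q) \<in> reach H (induced_edges E H)"
  proof -
    obtain h where h1: "h \<in> H" and h2: "\<forall>p\<in>H. (p, h) \<in> (E \<inter> H \<times> H)\<^sup>*" using hub[of "w" H] by blast
    show ?thesis by (rule conn_hub[OF symE h1 h2])
  qed
  have Hne: "H \<noteq> {}" using wK unfolding H_def by blast
  have "nonsep V E H"
    unfolding nonsep_def
  proof (intro conjI ballI)
    show "H \<subseteq> V" by (rule HV)
    show "connected_graph H (induced_edges E H)" unfolding connected_graph_def using Hne connH by blast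
    fix v assume vH: "v \<in> H"
    have n1: "num_components H (induced_edges E H) = 1"
      by (rule ncomp_eq1[OF finH symH Hne connH])
    obtain h where h1: "h \<in> H - {v}" and h2: "\<forall>p\<in>H - {v}. (p, h) \<in> (E \<inter> (H - {v}) \<times> (H - {v}))\<^sup>*"
      using hub[of v "H - {v}"] by blast
    have "\<forall>p\<in>H - {v}. \<forall>q\<in>H - {v}. (p, q) \<in> reach (H - {v}) (induced_edges E (H - {v}))"
      by (rule conn_hub[OF symE h1 h2])
    hence "num_components (H - {v}) (induced_edges E (H - {v})) \<le> 1"
      using ncomp_le1[OF _ symH] finH by blast
    thus "\<not> cut_vertex H (induced_edges E H) v"
      unfolding cut_vertex_def using n1 induced_induced[of "H - {v}" H E] by auto
  qed
  moreover have "K \<subset> H" using uK unfolding H_def P_def by auto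
  ultimately show False using bl HV unfolding is_block_def by blast
qed



lemma phylo_sym: "(a, b) \<in> phylo_edges A \<Longrightarrow> (b, a) \<in> phylo_edges A"
  unfolding phylo_edges_def by blast

lemma dirA:
  assumes G: "graph V E" and KV: "K \<subseteq> V" and cK: "c \<in> K"
    and NB0: "\<forall>k\<in>K - {c}. \<forall>u\<in>V. (k, u) \<in> E \<longrightarrow> u \<in> K"
    and pd: "phylogeny_digraph V E W A"
  shows "phylogeny_digraph (V - (K - {c})) (induced_edges E (V - (K - {c})))
           (W - Inl ` (K - {c})) (A \<inter> (W - Inl ` (K - {c})) \<times> (W - Inl ` (K - {c})))
       \<and> card ((W - Inl ` (K - {c})) - Inl ` (V - (K - {c}))) = card (W - Inl ` V)"
proof -
  have NB: "\<And>k u. k \<in> K - {c} \<Longrightarrow> u \<in> V \<Longrightarrow> (k, u) \<in> E \<Longrightarrow> u \<in> K" using NB0 by blast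
  define V' where "V' = V - (K - {c})"
  define W' where "W' = W - Inl ` (K - {c})"
  define A' where "A' = A \<inter> W' \<times> W'"
  have symE: "sym E" using G unfolding graph_def by auto
  have finW: "finite W" and AW: "A \<subseteq> W \<times> W" and acA: "acyclic A" and VW: "Inl ` V \<subseteq> W"
    and WV: "W \<subseteq> Inl ` V \<union> range Inr"
    and edg: "\<forall>u\<in>V. \<forall>v\<in>V. (u, v) \<in> E \<longleftrightarrow> (Inl u, Inl v) \<in> phylo_edges A"
    and noin: "\<forall>x\<in>W - Inl ` V. \<forall>y\<in>Inl ` V. (x, y) \<notin> A"
    using pd unfolding phylogeny_digraph_def by auto
  have eqset: "W' - Inl ` V' = W - Inl ` V" unfolding W'_def V'_def using KV by auto
  have "phylogeny_digraph V' (induced_edges E V') W' A'"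
    unfolding phylogeny_digraph_def
  proof (intro conjI ballI)
    show "finite W'" unfolding W'_def using finW by auto
    show "A' \<subseteq> W' \<times> W'" unfolding A'_def by blast
    show "acyclic A'" unfolding A'_def using acA acyclic_subset by blast
    show "Inl ` V' \<subseteq> W'" unfolding V'_def W'_def using VW by auto
    show "W' \<subseteq> Inl ` V' \<union> range Inr"
    proof
      fix x assume x: "x \<in> W'"
      show "x \<in> Inl ` V' \<union> range Inr"
      proof (cases "x \<in> range Inr")
        case False
        then obtain y where y: "y \<in> V" "x = Inl y" using x WV unfolding W'_def by blast
        hence "y \<notin> K - {c}" using x unfolding W'_def by auto
        thus ?thesis using y unfolding V'_def by auto
      qed simp
    qed
  next
    fix x y :: "'a + nat" assume "x \<in> W' - Inl ` V'" "y \<in> Inl ` V'"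
    thus "(x, y) \<notin> A'" using noin eqset unfolding A'_def V'_def by auto
  next
    fix u v assume uV: "u \<in> V'" and vV: "v \<in> V'"
    have uV0: "u \<in> V" and vV0: "v \<in> V" using uV vV unfolding V'_def by auto
    have uW: "Inl u \<in> W'" and vW: "Inl v \<in> W'" using uV vV VW unfolding V'_def W'_def by auto
    have "(Inl u, Inl v) \<in> phylo_edges A \<longleftrightarrow> (Inl u, Inl v) \<in> phylo_edges A'"
    proof
      assume ph: "(Inl u, Inl v) \<in> phylo_edges A"
      hence uv: "u \<noteq> v" unfolding phylo_edges_def by auto
      show "(Inl u, Inl v) \<in> phylo_edges A'"
      proof (cases "(Inl u, Inl v) \<in> A \<or> (Inl v, Inl u) \<in> A")
        case True
        thus ?thesis using uW vW uv unfolding phylo_edges_def A'_def by auto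
      next
        case False
        then obtain x where x: "(Inl u, x) \<in> A" "(Inl v, x) \<in> A" using ph unfolding phylo_edges_def by auto
        have xW: "x \<in> W" using x AW by auto
        show ?thesis
        proof (cases "x \<in> W'")
          case True
          thus ?thesis using x uW vW uv unfolding phylo_edges_def A'_def by auto
        next
          case False
          then obtain k where k: "k \<in> K - {c}" "x = Inl k" using xW unfolding W'_def by auto
          have kV: "k \<in> V" using k KV by auto
          have "u \<noteq> k" "v \<noteq> k" using uV vV k unfolding V'_def by auto
          hence "(Inl u, Inl k) \<in> phylo_edges A" "(Inl v, Inl k) \<in> phylo_edges A"
            using x k unfolding phylo_edges_def by auto
          hence "(u, k) \<in> E" "(v, k) \<in> E" using edg uV0 vV0 kV by auto
          hence "(k, u) \<in> E" "(k, v) \<in> E" using symE unfolding sym_def by auto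
          hence "u \<in> K" "v \<in> K" using NB k uV0 vV0 by auto
          hence "u = c" "v = c" using uV vV unfolding V'_def by auto
          thus ?thesis using uv by simp
        qed
      qed
    next
      assume "(Inl u, Inl v) \<in> phylo_edges A'"
      thus "(Inl u, Inl v) \<in> phylo_edges A" unfolding phylo_edges_def A'_def by blast
    qed
    moreover have "(u, v) \<in> induced_edges E V' \<longleftrightarrow> (u, v) \<in> E"
      using uV vV unfolding induced_edges_def by auto
    ultimately show "(u, v) \<in> induced_edges E V' \<longleftrightarrow> (Inl u, Inl v) \<in> phylo_edges A'"
      using edg uV0 vV0 by auto
  qed
  thus ?thesis using eqset unfolding V'_def W'_def A'_def by simp
qed



lemma dirB:
  assumes G: "graph V E" and KV: "K \<subseteq> V" and cK: "c \<in> K" and cl: "clique V E K"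
    and NB0: "\<forall>k\<in>K - {c}. \<forall>u\<in>V. (k, u) \<in> E \<longrightarrow> u \<in> K"
    and pd: "phylogeny_digraph (V - (K - {c})) (induced_edges E (V - (K - {c}))) W A"
  shows "\<exists>W' A'. phylogeny_digraph V E W' A' \<and>
           card (W' - Inl ` V) = card (W - Inl ` (V - (K - {c})))"
proof -
  have NB: "\<And>k u. k \<in> K - {c} \<Longrightarrow> u \<in> V \<Longrightarrow> (k, u) \<in> E \<Longrightarrow> u \<in> K" using NB0 by blast
  define V' where "V' = V - (K - {c})"
  define KK where "KK = K - {c}"
  have finV: "finite V" and symE: "sym E" and irr: "irrefl E" and EV: "E \<subseteq> V \<times> V"
    using G unfolding graph_def by auto
  have clq: "\<And>x y. x \<in> K \<Longrightarrow> y \<in> K \<Longrightarrow> x \<noteq> y \<Longrightarrow> (x, y) \<in> E"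
    using cl unfolding clique_def by auto
  have finW: "finite W" and AW: "A \<subseteq> W \<times> W" and acA: "acyclic A" and VW: "Inl ` V' \<subseteq> W"
    and WV: "W \<subseteq> Inl ` V' \<union> range Inr"
    and edg: "\<forall>u\<in>V'. \<forall>v\<in>V'. (u, v) \<in> induced_edges E V' \<longleftrightarrow> (Inl u, Inl v) \<in> phylo_edges A"
    and noin: "\<forall>x\<in>W - Inl ` V'. \<forall>y\<in>Inl ` V'. (x, y) \<notin> A"
    using pd unfolding phylogeny_digraph_def V'_def by auto
  have finKK: "finite KK" unfolding KK_def using KV finV finite_subset by blast
  obtain f :: "'a \<Rightarrow> nat" where inj: "inj_on f KK"
    using finite_imp_inj_to_nat_seg[OF finKK] by blast
  have cKK: "c \<notin> KK" unfolding KK_def by simp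
  have KKV': "\<And>k. k \<in> KK \<Longrightarrow> k \<notin> V'" unfolding KK_def V'_def by auto
  have cV': "c \<in> V'" unfolding V'_def using cK KV by auto
  have nW: "\<And>k. k \<in> KK \<Longrightarrow> Inl k \<notin> W" using WV KKV' by auto
  define B :: "(('a + nat) \<times> ('a + nat)) set" where
    "B = {(Inl c, Inl k) | k. k \<in> KK} \<union> {(Inl k, Inl k') | k k'. k \<in> KK \<and> k' \<in> KK \<and> f k < f k'}"
  define W' where "W' = W \<union> Inl ` KK"
  define A' where "A' = A \<union> B"
  have Bout: "\<And>x y. (x, y) \<in> B \<Longrightarrow> \<exists>k\<in>KK. y = Inl k" unfolding B_def by auto
  have outKK: "\<And>k y. k \<in> KK \<Longrightarrow> (Inl k, y) \<in> A' \<Longrightarrow> \<exists>k'\<in>KK. y = Inl k' \<and> f k < f k'"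
  proof -
    fix k y assume k: "k \<in> KK" and ky: "(Inl k, y) \<in> A'"
    have "(Inl k, y) \<notin> A" using AW nW[OF k] by auto
    hence "(Inl k, y) \<in> B" using ky unfolding A'_def by auto
    thus "\<exists>k'\<in>KK. y = Inl k' \<and> f k < f k'" using k cKK unfolding B_def by auto
  qed
  have inKK: "\<And>k y. k \<in> KK \<Longrightarrow> (y, Inl k) \<in> A' \<Longrightarrow> y = Inl c \<or> (\<exists>k'\<in>KK. y = Inl k')"
  proof -
    fix k y assume k: "k \<in> KK" and ky: "(y, Inl k) \<in> A'"
    have "(y, Inl k) \<notin> A" using AW nW[OF k] by auto
    hence "(y, Inl k) \<in> B" using ky unfolding A'_def by auto
    thus "y = Inl c \<or> (\<exists>k'\<in>KK. y = Inl k')" unfolding B_def by auto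
  qed
  have acyc: "acyclic A'"
  proof -
    have cl: "\<And>x y. (x, y) \<in> A'\<^sup>+ \<Longrightarrow> (x, y) \<in> A\<^sup>+ \<or>
        (\<exists>k'\<in>KK. y = Inl k' \<and> (\<forall>k\<in>KK. x = Inl k \<longrightarrow> f k < f k'))"
    proof -
      fix x y assume "(x, y) \<in> A'\<^sup>+"
      thus "(x, y) \<in> A\<^sup>+ \<or> (\<exists>k'\<in>KK. y = Inl k' \<and> (\<forall>k\<in>KK. x = Inl k \<longrightarrow> f k < f k'))"
      proof (induction rule: trancl_induct)
        case (base y)
        show ?case
        proof (cases "(x, y) \<in> A")
          case True then show ?thesis by auto
        next
          case False
          hence "(x, y) \<in> B" using base unfolding A'_def by auto
          thus ?thesis unfolding B_def using cKK by auto
        qed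
      next
        case (step y z)
        from step.IH show ?case
        proof
          assume xy: "(x, y) \<in> A\<^sup>+"
          show ?thesis
          proof (cases "(y, z) \<in> A")
            case True then show ?thesis using xy by auto
          next
            case False
            hence yzB: "(y, z) \<in> B" using step unfolding A'_def by auto
            then obtain k' where k': "k' \<in> KK" "z = Inl k'" using Bout by blast
            have "x \<in> W" using xy AW by (induction rule: trancl_induct) auto
            hence "\<forall>k\<in>KK. x = Inl k \<longrightarrow> f k < f k'" using nW by auto
            thus ?thesis using k' by blast
          qed
        next
          assume "\<exists>k'\<in>KK. y = Inl k' \<and> (\<forall>k\<in>KK. x = Inl k \<longrightarrow> f k < f k')"
          then obtain k' where k': "k' \<in> KK" "y = Inl k'" "\<forall>k\<in>KK. x = Inl k \<longrightarrow> f k < f k'" by blast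
          then obtain k'' where k'': "k'' \<in> KK" "z = Inl k''" "f k' < f k''"
            using outKK step by blast
          have "\<forall>k\<in>KK. x = Inl k \<longrightarrow> f k < f k''" using k' k'' by auto
          thus ?thesis using k'' by blast
        qed
      qed
    qed
    show ?thesis unfolding acyclic_def
    proof
      fix x show "(x, x) \<notin> A'\<^sup>+"
      proof
        assume "(x, x) \<in> A'\<^sup>+"
        from cl[OF this] show False using acA unfolding acyclic_def by auto
      qed
    qed
  qed
  have eqset: "W' - Inl ` V = W - Inl ` V'"
  proof
    show "W' - Inl ` V \<subseteq> W - Inl ` V'" unfolding W'_def V'_def KK_def using KV by auto
    show "W - Inl ` V' \<subseteq> W' - Inl ` V"
    proof
      fix x assume x: "x \<in> W - Inl ` V'"
      have "x \<notin> Inl ` V"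
      proof
        assume "x \<in> Inl ` V"
        then obtain y where y: "y \<in> V" "x = Inl y" by blast
        have "y \<notin> V'" using x y by auto
        hence "y \<in> KK" using y unfolding V'_def KK_def by auto
        thus False using nW x y by auto
      qed
      thus "x \<in> W' - Inl ` V" using x unfolding W'_def by auto
    qed
  qed
  have VV: "V = V' \<union> KK" unfolding V'_def KK_def using KV by auto
  have case2: "\<And>u v. u \<in> KK \<Longrightarrow> v \<in> V \<Longrightarrow> (u, v) \<in> E \<longleftrightarrow> (Inl u, Inl v) \<in> phylo_edges A'"
  proof -
    fix u v assume u: "u \<in> KK" and v: "v \<in> V"
    have uK: "u \<in> K" using u unfolding KK_def by auto
    have "(u, v) \<in> E \<longleftrightarrow> v \<in> K \<and> v \<noteq> u"
      using NB[of u v] u v irr clq[OF uK] unfolding KK_def irrefl_def by auto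
    moreover have "(Inl u, Inl v) \<in> phylo_edges A' \<longleftrightarrow> v \<in> K \<and> v \<noteq> u"
    proof
      assume ph: "(Inl u, Inl v) \<in> phylo_edges A'"
      have vu: "v \<noteq> u" using ph unfolding phylo_edges_def by auto
      have "v = c \<or> v \<in> KK"
      proof -
        have "(Inl u, Inl v) \<in> A' \<or> (Inl v, Inl u) \<in> A' \<or> (\<exists>x. (Inl u, x) \<in> A' \<and> (Inl v, x) \<in> A')"
          using ph unfolding phylo_edges_def by auto
        thus ?thesis
        proof (elim disjE exE conjE)
          assume "(Inl u, Inl v) \<in> A'" thus ?thesis using outKK[OF u] by auto
        next
          assume "(Inl v, Inl u) \<in> A'" thus ?thesis using inKK[OF u] by auto
        next
          fix x assume "(Inl u, x) \<in> A'" "(Inl v, x) \<in> A'"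
          thus ?thesis using outKK[OF u] inKK by fastforce
        qed
      qed
      thus "v \<in> K \<and> v \<noteq> u" using vu cK unfolding KK_def by auto
    next
      assume vK: "v \<in> K \<and> v \<noteq> u"
      show "(Inl u, Inl v) \<in> phylo_edges A'"
      proof (cases "v = c")
        case True
        hence "(Inl v, Inl u) \<in> A'" unfolding A'_def B_def using u by auto
        thus ?thesis using vK unfolding phylo_edges_def by auto
      next
        case False
        hence vKK: "v \<in> KK" using vK unfolding KK_def by auto
        have "f u \<noteq> f v" using inj u vKK vK unfolding inj_on_def by auto
        hence "f u < f v \<or> f v < f u" by auto
        hence "(Inl u, Inl v) \<in> A' \<or> (Inl v, Inl u) \<in> A'" unfolding A'_def B_def using u vKK by auto
        thus ?thesis using vK unfolding phylo_edges_def by auto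
      qed
    qed
    ultimately show "(u, v) \<in> E \<longleftrightarrow> (Inl u, Inl v) \<in> phylo_edges A'" by simp
  qed
  have case1: "\<And>u v. u \<in> V' \<Longrightarrow> v \<in> V' \<Longrightarrow> (u, v) \<in> E \<longleftrightarrow> (Inl u, Inl v) \<in> phylo_edges A'"
  proof -
    fix u v assume u: "u \<in> V'" and v: "v \<in> V'"
    have "(u, v) \<in> E \<longleftrightarrow> (Inl u, Inl v) \<in> phylo_edges A"
      using edg u v unfolding induced_edges_def by auto
    moreover have "(Inl u, Inl v) \<in> phylo_edges A \<longleftrightarrow> (Inl u, Inl v) \<in> phylo_edges A'"
    proof
      assume "(Inl u, Inl v) \<in> phylo_edges A"
      thus "(Inl u, Inl v) \<in> phylo_edges A'" unfolding phylo_edges_def A'_def by blast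
    next
      assume ph: "(Inl u, Inl v) \<in> phylo_edges A'"
      have uv: "u \<noteq> v" using ph unfolding phylo_edges_def by auto
      have nB1: "(Inl u, Inl v) \<notin> B" "(Inl v, Inl u) \<notin> B" using Bout u v KKV' by blast+
      have "(Inl u, Inl v) \<in> A' \<or> (Inl v, Inl u) \<in> A' \<or> (\<exists>x. (Inl u, x) \<in> A' \<and> (Inl v, x) \<in> A')"
        using ph unfolding phylo_edges_def by auto
      thus "(Inl u, Inl v) \<in> phylo_edges A"
      proof (elim disjE exE conjE)
        assume "(Inl u, Inl v) \<in> A'" thus ?thesis using nB1 uv unfolding A'_def phylo_edges_def by auto
      next
        assume "(Inl v, Inl u) \<in> A'" thus ?thesis using nB1 uv unfolding A'_def phylo_edges_def by auto
      next
        fix x assume ux: "(Inl u, x) \<in> A'" and vx: "(Inl v, x) \<in> A'"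
        show ?thesis
        proof (cases "(Inl u, x) \<in> A \<and> (Inl v, x) \<in> A")
          case True thus ?thesis using uv unfolding phylo_edges_def by auto
        next
          case False
          hence "(Inl u, x) \<in> B \<or> (Inl v, x) \<in> B" using ux vx unfolding A'_def by auto
          then obtain k where k: "k \<in> KK" "x = Inl k" using Bout by blast
          have "Inl u = Inl c \<or> (\<exists>k'\<in>KK. Inl u = Inl k')" using inKK[OF k(1)] ux k by auto
          hence "u = c" using u KKV' by auto
          moreover have "Inl v = Inl c \<or> (\<exists>k'\<in>KK. Inl v = Inl k')" using inKK[OF k(1)] vx k by auto
          hence "v = c" using v KKV' by auto
          ultimately show ?thesis using uv by simp
        qed
      qed
    qed
    ultimately show "(u, v) \<in> E \<longleftrightarrow> (Inl u, Inl v) \<in> phylo_edges A'" by simp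
  qed
  have "phylogeny_digraph V E W' A'"
    unfolding phylogeny_digraph_def
  proof (intro conjI ballI)
    show "finite W'" unfolding W'_def using finW finKK by auto
    show "A' \<subseteq> W' \<times> W'" unfolding A'_def W'_def B_def using AW VW cV' by auto
    show "acyclic A'" by (rule acyc)
    show "Inl ` V \<subseteq> W'" unfolding W'_def using VW VV by auto
    show "W' \<subseteq> Inl ` V \<union> range Inr" unfolding W'_def using WV VV by auto
  next
    fix x y :: "'a + nat" assume x: "x \<in> W' - Inl ` V" and y: "y \<in> Inl ` V"
    have xW: "x \<in> W - Inl ` V'" using x eqset by auto
    have "(x, y) \<notin> B" using x VV cK KV unfolding B_def by auto
    moreover have "(x, y) \<notin> A"
    proof
      assume xy: "(x, y) \<in> A"
      hence "y \<in> W" using AW by auto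
      then obtain y0 where "y = Inl y0" "y0 \<in> V'" using y VV nW by auto
      thus False using noin xW xy by auto
    qed
    ultimately show "(x, y) \<notin> A'" unfolding A'_def by auto
  next
    fix u v assume u: "u \<in> V" and v: "v \<in> V"
    show "(u, v) \<in> E \<longleftrightarrow> (Inl u, Inl v) \<in> phylo_edges A'"
    proof (cases "u \<in> KK")
      case True thus ?thesis using case2 v by blast
    next
      case False
      show ?thesis
      proof (cases "v \<in> KK")
        case True
        have "(u, v) \<in> E \<longleftrightarrow> (v, u) \<in> E" using symE unfolding sym_def by blast
        also have "\<dots> \<longleftrightarrow> (Inl v, Inl u) \<in> phylo_edges A'" using case2 True u by blast
        also have "\<dots> \<longleftrightarrow> (Inl u, Inl v) \<in> phylo_edges A'" using phylo_sym[of "Inl v" "Inl u" A'] phylo_sym[of "Inl u" "Inl v" A'] by blast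
        finally show ?thesis .
      next
        case False
        have uv': "u \<in> V'" "v \<in> V'" using u v VV \<open>u \<notin> KK\<close> False by auto
        show ?thesis by (rule case1[OF uv'])
      qed
    qed
  qed
  moreover have "card (W' - Inl ` V) = card (W - Inl ` (V - (K - {c})))" using eqset unfolding V'_def by simp
  ultimately show ?thesis by (intro exI conjI)
qed


theorem mainTheorem5:
  fixes V :: "'a set" and E :: "('a \<times> 'a) set" and K :: "'a set" and c :: 'a
  assumes "graph V E"
    and "clique V E K"
    and "is_block V E K"
    and "c \<in> K"
    and "cut_vertex V E c"
    and "\<forall>v\<in>K. cut_vertex V E v \<longrightarrow> v = c"
  shows "phylogeny_number V E =
         phylogeny_number (V - (K - {c})) (induced_edges E (V - (K - {c})))"
proof -
  have KV: "K \<subseteq> V" using assms(2) unfolding clique_def by auto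
  have NB: "\<And>k u. k \<in> K - {c} \<Longrightarrow> u \<in> V \<Longrightarrow> (k, u) \<in> E \<Longrightarrow> u \<in> K"
  proof -
    fix k u assume k: "k \<in> K - {c}" and u: "u \<in> V" and ku: "(k, u) \<in> E"
    have "\<not> cut_vertex V E k" using assms(6) k by auto
    thus "u \<in> K" using key[OF assms(1,2,3,4), of k u] k u ku by auto
  qed
  have NB0: "\<forall>k\<in>K - {c}. \<forall>u\<in>V. (k, u) \<in> E \<longrightarrow> u \<in> K" using NB by blast
  have eq: "\<And>n. (\<exists>W A. phylogeny_digraph V E W A \<and> card (W - Inl ` V) = n) \<longleftrightarrow>
     (\<exists>W A. phylogeny_digraph (V - (K - {c})) (induced_edges E (V - (K - {c}))) W A \<and>
        card (W - Inl ` (V - (K - {c}))) = n)"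
  proof
    fix n
    assume "\<exists>W A. phylogeny_digraph V E W A \<and> card (W - Inl ` V) = n"
    then obtain W A where "phylogeny_digraph V E W A" "card (W - Inl ` V) = n" by blast
    thus "\<exists>W A. phylogeny_digraph (V - (K - {c})) (induced_edges E (V - (K - {c}))) W A \<and>
        card (W - Inl ` (V - (K - {c}))) = n"
      using dirA[of V E K c W A, OF assms(1) KV assms(4) NB0] by blast
  next
    fix n
    assume "\<exists>W A. phylogeny_digraph (V - (K - {c})) (induced_edges E (V - (K - {c}))) W A \<and>
        card (W - Inl ` (V - (K - {c}))) = n"
    then obtain W A where "phylogeny_digraph (V - (K - {c})) (induced_edges E (V - (K - {c}))) W A"
      "card (W - Inl ` (V - (K - {c}))) = n" by blast
    thus "\<exists>W A. phylogeny_digraph V E W A \<and> card (W - Inl ` V) = n"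
      using dirB[of V E K c W A, OF assms(1) KV assms(4) assms(2) NB0] by metis
  qed
  show ?thesis unfolding phylogeny_number_def using eq by simp
qed


end
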